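(* If $w\ge 3$, then $m_3^{(1)}(3,w)$ equals the Griesmer upper bound, i.e. the largest integer $n$ with $n\ge g_3^{(2)}(4,n-w)$. Moreover, $m_3^{(1)}(3,2)=10$.
   Context: For a prime power $q$ and $N\ge1$, a multiset of points in $\mathrm{PG}(N,q)$ is a map $\mathcal{K}$ from the points to $\mathbb{Z}_{\ge0}$, with $\mathcal{K}(S)=\sum_{P\in S}\mathcal{K}(P)$; its cardinality is $\mathcal{K}(\mathrm{PG}(N,q))$. Dimensions are projective (lines have dimension 1). For $0\le r\le N-1$ and a positive integer $w$, $m_q^{(r)}(N,w)$ is the maximum cardinality of a multiset of points in $\mathrm{PG}(N,q)$ such that every $r$-dimensional subspace has multiplicity at most $w$. Let $v_j=(q^j-1)/(q-1)$ and, for $1\le s\le k$, $g_q^{(s)}(k,d)=d+\sum_{i=1}^{k-s}\lceil d/(q^iv_s)\rceil$. The Griesmer upper bound for $m_q^{(r)}(N,w)$ is the largest integer $n$ with $n\ge g_q^{(N-r)}(N+1,n-w)$. *)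

theory Defs
  imports Complex_Main
begin

text \<open>Vectors of the ambient space F^(N+1), where F is a field given as a type:
  functions nat => F vanishing at all indices > N (coordinates 0..N).\<close>
definition vecs :: "nat \<Rightarrow> (nat \<Rightarrow> 'a::field) set" where
  "vecs N = {v. \<forall>i>N. v i = 0}"

definition lin_comb :: "(nat \<Rightarrow> 'a::field) list \<Rightarrow> (nat \<Rightarrow> 'a) \<Rightarrow> (nat \<Rightarrow> 'a)" where
  "lin_comb vs c = (\<lambda>j. \<Sum>i<length vs. c i * (vs ! i) j)"

definition span_list :: "(nat \<Rightarrow> 'a::field) list \<Rightarrow> (nat \<Rightarrow> 'a) set" where
  "span_list vs = {lin_comb vs c | c. True}"

definition lin_indep :: "(nat \<Rightarrow> 'a::field) list \<Rightarrow> bool" where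
  "lin_indep vs \<longleftrightarrow> (\<forall>c. lin_comb vs c = (\<lambda>_. 0) \<longrightarrow> (\<forall>i<length vs. c i = 0))"

text \<open>Projective r-dimensional subspaces of PG(N,F) = linear subspaces of F^(N+1) of
  vector-space dimension r+1 (given by a basis).\<close>
definition proj_subspace :: "nat \<Rightarrow> nat \<Rightarrow> (nat \<Rightarrow> 'a::field) set \<Rightarrow> bool" where
  "proj_subspace N r S \<longleftrightarrow>
     (\<exists>vs. length vs = r + 1 \<and> set vs \<subseteq> vecs N \<and> lin_indep vs \<and> S = span_list vs)"

definition points :: "nat \<Rightarrow> (nat \<Rightarrow> 'a::field) set set" where
  "points N = {S. proj_subspace N 0 S}"

text \<open>A multiset of points is a map K from points to nat (values off points are irrelevant).
  K(S) = sum of K(P) over the points P contained in S.\<close>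
definition mult_of :: "nat \<Rightarrow> ((nat \<Rightarrow> 'a::field) set \<Rightarrow> nat) \<Rightarrow> (nat \<Rightarrow> 'a) set \<Rightarrow> nat" where
  "mult_of N K S = (\<Sum>P\<in>{P\<in>points N. P \<subseteq> S}. K P)"

definition msize :: "nat \<Rightarrow> ((nat \<Rightarrow> 'a::field) set \<Rightarrow> nat) \<Rightarrow> nat" where
  "msize N K = (\<Sum>P\<in>points N. K P)"

text \<open>m_q^(r)(N,w) over the field F = 'a (with q = CARD('a)).\<close>
definition m_max :: "'a::field itself \<Rightarrow> nat \<Rightarrow> nat \<Rightarrow> nat \<Rightarrow> nat" where
  "m_max _ r N w = Max {msize N K | K :: (nat \<Rightarrow> 'a) set \<Rightarrow> nat.
       \<forall>S. proj_subspace N r S \<longrightarrow> mult_of N K S \<le> w}"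

definition vnum :: "nat \<Rightarrow> nat \<Rightarrow> nat" where
  "vnum q j = (q ^ j - 1) div (q - 1)"

definition griesmer_g :: "nat \<Rightarrow> nat \<Rightarrow> nat \<Rightarrow> int \<Rightarrow> int" where
  "griesmer_g q s k d = d + (\<Sum>i=1..k-s. \<lceil>real_of_int d / real (q ^ i * vnum q s)\<rceil>)"

definition griesmer_ub :: "nat \<Rightarrow> nat \<Rightarrow> nat \<Rightarrow> nat \<Rightarrow> int" where
  "griesmer_ub q r N w = (GREATEST n::int. n \<ge> griesmer_g q (N - r) (N + 1) (n - int w))"

end

theory Submission imports Defs "HOL-Library.Function_Algebras" "HOL-Library.FuncSet" begin

definition sc :: "'a::field \<Rightarrow> (nat \<Rightarrow> 'a) \<Rightarrow> (nat \<Rightarrow> 'a)" where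
  "sc c v = (\<lambda>j. c * v j)"

definition ptof :: "(nat \<Rightarrow> 'a::field) \<Rightarrow> (nat \<Rightarrow> 'a) set" where
  "ptof v = span_list [v]"

definition span2 :: "(nat \<Rightarrow> 'a::field) \<Rightarrow> (nat \<Rightarrow> 'a) \<Rightarrow> (nat \<Rightarrow> 'a) set" where
  "span2 x y = {sc s x + sc t y | s t. True}"

definition indep2 :: "(nat \<Rightarrow> 'a::field) \<Rightarrow> (nat \<Rightarrow> 'a) \<Rightarrow> bool" where
  "indep2 x y \<longleftrightarrow> (\<forall>s t. sc s x + sc t y = 0 \<longrightarrow> s = 0 \<and> t = 0)"

lemma sc_simps[simp]: "sc 0 v = 0" "sc 1 v = v" "sc (-1) v = - v" "sc c 0 = 0"
  "sc a (sc b v) = sc (a*b) v" "sc c (x + y) = sc c x + sc c y" "sc (a + b) v = sc a v + sc b v"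
  "sc c (- v) = - sc c v" "sc (- c) v = - sc c v" "(sc c v) j = c * v j"
  by (auto simp: sc_def fun_eq_iff algebra_simps)

lemma sc_eq0: "sc c v = 0 \<longleftrightarrow> c = 0 \<or> v = 0"
  by (auto simp: sc_def fun_eq_iff)

lemma lin_comb_single: "lin_comb [v] c = sc (c 0) v"
  by (simp add: lin_comb_def sc_def)

lemma span_single: "span_list [v] = range (\<lambda>c. sc c v)"
  unfolding span_list_def lin_comb_single
  by auto

lemma ptof_eq: "ptof v = range (\<lambda>c. sc c v)"
  by (simp add: ptof_def span_single)

lemma indep_single: "lin_indep [v] \<longleftrightarrow> v \<noteq> 0"
  unfolding lin_indep_def
  apply (auto simp: lin_comb_single sc_eq0[unfolded zero_fun_def])
  subgoal by (drule spec[of _ "\<lambda>_. 1"]) simp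
  done

lemma lin_comb_two: "lin_comb [x, y] c = sc (c 0) x + sc (c 1) y"
  by (simp add: lin_comb_def sc_def fun_eq_iff lessThan_nat_numeral)

lemma span_two: "span_list [x, y] = span2 x y"
  unfolding span_list_def span2_def lin_comb_two
  apply auto
  subgoal for s t by (rule exI[of _ "\<lambda>i. if i = 0 then s else t"]) simp
  done

lemma indep_two: "lin_indep [x, y] \<longleftrightarrow> indep2 x y"
  unfolding lin_indep_def indep2_def lin_comb_two
  apply (auto simp flip: zero_fun_def)
  subgoal for s t
    apply (drule spec[of _ "\<lambda>i. if i = 0 then s else t"]) by auto
  subgoal for s t
    apply (drule spec[of _ "\<lambda>i. if i = 0 then s else t"]) by auto
  subgoal for c i
    apply (drule spec[of _ "c 0"], drule spec[of _ "c 1"]) by (auto simp: less_Suc_eq)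
  done

lemma points_eq: "points N = {ptof v | v. v \<in> vecs N \<and> v \<noteq> 0}"
  unfolding points_def proj_subspace_def ptof_def
  apply auto
  subgoal for vs
    apply (cases vs) apply simp
    subgoal for v vs' by (rule exI[of _ v]) (auto simp: indep_single)
    done
  subgoal for v by (rule exI[of _ "[v]"]) (auto simp: indep_single)
  done

lemma lines_eq: "proj_subspace N 1 S \<longleftrightarrow>
   (\<exists>x y. x \<in> vecs N \<and> y \<in> vecs N \<and> indep2 x y \<and> S = span2 x y)"
  unfolding proj_subspace_def
  apply (auto simp: indep_two span_two)
  subgoal for vs
    apply (cases vs; simp) subgoal for x vs' apply (cases vs'; simp)
      subgoal for y by (auto simp: indep_two span_two) done done
  subgoal for x y by (rule exI[of _ "[x,y]"]) (auto simp: indep_two span_two)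
  done


locale F3 =
  fixes tt :: "'a::{field,finite} itself"
  assumes card3: "card (UNIV :: 'a set) = 3"
begin

lemma two_ne0: "(1::'a) + 1 \<noteq> 0"
proof
  assume h: "(1::'a) + 1 = 0"
  obtain t :: 'a where t: "t \<noteq> 0" "t \<noteq> 1"
  proof -
    have "card ({0,1}::'a set) = 2" by simp
    hence "({0,1}::'a set) \<noteq> UNIV" using card3 by (metis numeral_eq_iff semiring_norm(89))
    thus ?thesis using that by auto
  qed
  have "UNIV = {0, 1, t::'a}"
  proof -
    have "card {0,1,t::'a} = 3" using t by simp
    thus ?thesis using card3 by (metis card_subset_eq finite_UNIV subset_UNIV)
  qed
  hence "t + 1 \<in> {0,1,t}" by blast
  moreover have "t + 1 \<noteq> 0"
  proof
    assume "t + 1 = 0"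
    hence "t = -1" by (simp add: eq_neg_iff_add_eq_0)
    moreover have "(1::'a) = -1" using h by (simp add: add_eq_0_iff)
    ultimately show False using t by simp
  qed
  moreover have "t + 1 \<noteq> 1" using t by simp
  moreover have "t + 1 \<noteq> t" by simp
  ultimately show False by blast
qed

lemma UNIV3: "(UNIV::'a set) = {0, 1, -1}"
proof -
  have d: "(1::'a) \<noteq> -1" using two_ne0 by (metis add_eq_0_iff)
  have "card {0, 1, -1::'a} = 3" using d by simp
  thus ?thesis using card3 by (metis card_subset_eq finite_UNIV subset_UNIV)
qed

lemma all3: "(\<forall>c::'a. P c) \<longleftrightarrow> P 0 \<and> P 1 \<and> P (-1)"
  using UNIV3 by (metis UNIV_I empty_iff insert_iff)

lemma ex3: "(\<exists>c::'a. P c) \<longleftrightarrow> P 0 \<or> P 1 \<or> P (-1)"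
  using UNIV3 by (metis UNIV_I empty_iff insert_iff)

lemma one_ne_m1[simp]: "(1::'a) \<noteq> -1" "(-1::'a) \<noteq> 1"
  using two_ne0 by (metis add_eq_0_iff)+

lemma three0[simp]: "(2::'a) = -1" "(3::'a) = 0"
proof -
  have "(1::'a) + 1 \<in> {0,1,-1}" using UNIV3 by blast
  moreover have "(1::'a) + 1 \<noteq> 0" by (rule two_ne0)
  moreover have "(1::'a) + 1 \<noteq> 1" by (metis add_cancel_right_right one_neq_zero)
  ultimately have a: "(1::'a) + 1 = -1" by blast
  thus "(2::'a) = -1" by simp
  have "(3::'a) = (1 + 1) + 1" by simp
  also have "\<dots> = 0" using a by simp
  finally show "(3::'a) = 0" .
qed


end

definition Zs :: "nat set \<Rightarrow> (nat \<Rightarrow> 'b::zero) set" where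
  "Zs I = {y. \<forall>m. m \<notin> I \<longrightarrow> y m = 0}"

lemma Zs_bij: "bij_betw (\<lambda>y. restrict y I) (Zs I :: (nat \<Rightarrow> 'b::zero) set) (PiE I (\<lambda>_. UNIV))"
proof (rule bij_betw_imageI)
  show "inj_on (\<lambda>y. restrict y I) (Zs I :: (nat \<Rightarrow> 'b::zero) set)"
  proof (rule inj_onI)
    fix x y :: "nat \<Rightarrow> 'b" assume "x \<in> Zs I" "y \<in> Zs I" "restrict x I = restrict y I"
    note h = this
    show "x = y"
    proof
      fix m show "x m = y m"
      proof (cases "m \<in> I")
        case True then show ?thesis using h(3) by (metis restrict_apply')
      next
        case False then show ?thesis using h(1,2) by (simp add: Zs_def)
      qed
    qed
  qed
  show "(\<lambda>y. restrict y I) ` (Zs I :: (nat \<Rightarrow> 'b::zero) set) = PiE I (\<lambda>_. UNIV)"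
  proof
    show "(\<lambda>y. restrict y I) ` (Zs I :: (nat \<Rightarrow> 'b::zero) set) \<subseteq> PiE I (\<lambda>_. UNIV)"
      by (auto simp: restrict_PiE_iff)
    show "PiE I (\<lambda>_. UNIV) \<subseteq> (\<lambda>y. restrict y I) ` (Zs I :: (nat \<Rightarrow> 'b::zero) set)"
    proof
      fix f :: "nat \<Rightarrow> 'b" assume f: "f \<in> PiE I (\<lambda>_. UNIV)"
      let ?y = "\<lambda>m. if m \<in> I then f m else 0"
      have r: "restrict ?y I = f"
      proof (rule ext)
        fix m show "restrict ?y I m = f m"
        proof (cases "m \<in> I")
          case True thus ?thesis by simp
        next
          case False
          have "f m = undefined" using f False by (rule PiE_arb)
          moreover have "restrict ?y I m = undefined" using False by (simp only: restrict_def if_False)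
          ultimately show ?thesis by simp
        qed
      qed
      have yZ: "?y \<in> Zs I" by (simp add: Zs_def)
      show "f \<in> (\<lambda>y. restrict y I) ` Zs I"
        by (rule image_eqI[where f="\<lambda>y. restrict y I", OF r[symmetric] yZ])
    qed
  qed
qed

lemma card_Zs: "finite I \<Longrightarrow> card (Zs I :: (nat \<Rightarrow> 'b::{zero,finite}) set) = card (UNIV::'b set) ^ card I"
proof -
  assume I: "finite I"
  have "card (Zs I :: (nat \<Rightarrow> 'b) set) = card (PiE I (\<lambda>_. UNIV::'b set))" by (rule bij_betw_same_card[OF Zs_bij])
  thus ?thesis using I by (simp add: card_PiE)
qed

lemma finite_Zs: "finite I \<Longrightarrow> finite (Zs I :: (nat \<Rightarrow> 'b::{zero,finite}) set)"
proof -
  assume I: "finite I"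
  have "finite (PiE I (\<lambda>_. UNIV::'b set))" using I by (simp add: finite_PiE)
  thus ?thesis using bij_betw_finite[OF Zs_bij] by blast
qed

lemma vecs_Zs: "vecs N = Zs {0..N}"
  by (auto simp: vecs_def Zs_def)

lemma finite_vecs: "finite (vecs N :: (nat \<Rightarrow> 'a::{field,finite}) set)"
  by (simp add: vecs_Zs finite_Zs)

lemma vecs_closed[simp]: "x \<in> vecs N \<Longrightarrow> y \<in> vecs N \<Longrightarrow> x + y \<in> vecs N"
  "x \<in> vecs N \<Longrightarrow> sc c x \<in> vecs N" "x \<in> vecs N \<Longrightarrow> - x \<in> vecs N" "0 \<in> vecs N"
  "x \<in> vecs N \<Longrightarrow> y \<in> vecs N \<Longrightarrow> x - y \<in> vecs N"
  by (auto simp: vecs_def)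

context F3
begin

lemma card_vecs3: "card (vecs 3 :: (nat \<Rightarrow> 'a) set) = 81"
  by (simp add: vecs_Zs card_Zs card3)

lemma neg_ne: "(v::nat\<Rightarrow>'a) \<noteq> 0 \<Longrightarrow> v \<noteq> - v"
proof
  assume a: "v \<noteq> 0" "v = - v"
  have "v + v = 0" using a(2) by (metis add.right_inverse)
  moreover have "sc (1+1) v = v + v" by (simp only: sc_simps(7) sc_simps(2))
  moreover have "(1::'a) + 1 \<noteq> 0" by (rule two_ne0)
  ultimately show False using a(1) sc_eq0 by metis
qed

lemma ptof_neg[simp]: "ptof (- (v::nat\<Rightarrow>'a)) = ptof v"
  unfolding ptof_eq by (auto simp: image_iff) (metis minus_minus sc_simps(9))+

lemma in_ptof: "v \<in> ptof v"
  unfolding ptof_eq by (metis rangeI sc_simps(2))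

lemma ptof_eq_iff: "(x::nat\<Rightarrow>'a) \<noteq> 0 \<Longrightarrow> v \<noteq> 0 \<Longrightarrow> ptof x = ptof v \<longleftrightarrow> x = v \<or> x = - v"
proof
  assume "x \<noteq> 0" "ptof x = ptof v"
  hence "x \<in> range (\<lambda>c. sc c v)" using in_ptof ptof_eq by metis
  then obtain c where "x = sc c v" by auto
  thus "x = v \<or> x = - v" using \<open>x \<noteq> 0\<close> all3[of "\<lambda>c. x = sc c v \<longrightarrow> x = v \<or> x = - v"] by simp
qed auto

lemma sc_cases: "sc (c::'a) v = 0 \<or> sc c v = v \<or> sc c v = - v"
  using all3[of "\<lambda>c. sc c v = 0 \<or> sc c v = v \<or> sc c v = - v"] by simp

lemma ptof_sc[simp]: "(c::'a) \<noteq> 0 \<Longrightarrow> ptof (sc c v) = ptof v"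
  using all3[of "\<lambda>c. c \<noteq> 0 \<longrightarrow> ptof (sc c v) = ptof v"] by simp


lemma pts_in_S:
  assumes S: "S \<subseteq> vecs N" and cl: "\<And>c x. x \<in> S \<Longrightarrow> sc c x \<in> S"
  shows "{P\<in>points N. P \<subseteq> S} = ptof ` (S - {0::nat\<Rightarrow>'a})"
proof
  show "{P\<in>points N. P \<subseteq> S} \<subseteq> ptof ` (S - {0})"
  proof
    fix P assume "P \<in> {P\<in>points N. P \<subseteq> S}"
    then obtain v where v: "P = ptof v" "v \<in> vecs N" "v \<noteq> 0" "P \<subseteq> S" by (auto simp: points_eq)
    hence "v \<in> S" using in_ptof by blast
    thus "P \<in> ptof ` (S - {0})" using v by blast
  qed
  show "ptof ` (S - {0}) \<subseteq> {P\<in>points N. P \<subseteq> S}"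
  proof
    fix P assume "P \<in> ptof ` (S - {0})"
    then obtain x where x: "P = ptof x" "x \<in> S" "x \<noteq> 0" by blast
    have "x \<in> vecs N" using x S by blast
    hence "P \<in> points N" using x by (auto simp: points_eq)
    moreover have "P \<subseteq> S" using x cl by (auto simp: ptof_eq)
    ultimately show "P \<in> {P\<in>points N. P \<subseteq> S}" by blast
  qed
qed

lemma mult_vec:
  assumes S: "S \<subseteq> vecs N" and cl: "\<And>c x. x \<in> S \<Longrightarrow> sc c x \<in> S"
  shows "2 * mult_of N K S = (\<Sum>x\<in>S-{0::nat\<Rightarrow>'a}. K (ptof x))"
proof -
  have fin: "finite (S - {0})" using S finite_vecs finite_subset by blast
  have "(\<Sum>x\<in>S-{0}. K (ptof x)) = (\<Sum>P\<in>ptof ` (S-{0}). \<Sum>x\<in>{x. x \<in> S-{0} \<and> ptof x = P}. K (ptof x))"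
    by (rule sum.image_gen[OF fin])
  also have "\<dots> = (\<Sum>P\<in>ptof ` (S-{0}). 2 * K P)"
  proof (rule sum.cong[OF refl])
    fix P assume "P \<in> ptof ` (S - {0})"
    then obtain v where v: "P = ptof v" "v \<in> S" "v \<noteq> 0" by blast
    have mv: "- v \<in> S" using cl[OF v(2), of "-1"] by simp
    have "{x. x \<in> S-{0} \<and> ptof x = P} = {v, -v}"
      using v mv by (auto simp: ptof_eq_iff)
    moreover have "v \<noteq> - v" using v(3) by (rule neg_ne)
    ultimately show "(\<Sum>x\<in>{x. x \<in> S-{0} \<and> ptof x = P}. K (ptof x)) = 2 * K P"
      using v by simp
  qed
  also have "\<dots> = 2 * mult_of N K S"
    by (simp add: mult_of_def pts_in_S[OF S cl] sum_distrib_left)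
  finally show ?thesis by simp
qed

lemma msize_vec: "2 * msize 3 K = (\<Sum>x\<in>vecs 3-{0::nat\<Rightarrow>'a}. K (ptof x))"
proof -
  have "msize 3 K = mult_of 3 K (vecs 3 :: (nat\<Rightarrow>'a) set)"
    unfolding msize_def mult_of_def
  proof (rule sum.cong)
    show "points 3 = {P\<in>points 3. P \<subseteq> (vecs 3 :: (nat\<Rightarrow>'a) set)}"
      by (auto simp: points_eq ptof_eq)
  qed simp
  thus ?thesis using mult_vec[of "vecs 3" 3 K] by simp
qed


lemma UNIV2_minus: "(UNIV::('a\<times>'a) set) - {(0,0)} =
   {(0,1),(0,-1),(1,0),(1,1),(1,-1),(-1,0),(-1,1),(-1,-1)}"
  using UNIV3 by auto

lemma span2_img: "span2 x y = (\<lambda>(s,t). sc s x + sc t y) ` (UNIV::('a\<times>'a) set)"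
  by (auto simp: span2_def)

lemma indep2_inj: "indep2 (x::nat\<Rightarrow>'a) y \<Longrightarrow> inj (\<lambda>(s,t). sc s x + sc t y)"
proof (rule injI, clarsimp)
  fix s t s' t' :: 'a
  assume i: "indep2 x y" and e: "sc s x + sc t y = sc s' x + sc t' y"
  have "sc (s - s') x + sc (t - t') y = 0"
    using e by (simp add: sc_def fun_eq_iff algebra_simps)
  hence "s - s' = 0 \<and> t - t' = 0" using i unfolding indep2_def by blast
  thus "s = s' \<and> t = t'" by simp
qed

lemma ptof_negs[simp]: "ptof (- x + (y::nat\<Rightarrow>'a)) = ptof (x - y)" "ptof (- x - (y::nat\<Rightarrow>'a)) = ptof (x + y)"
proof -
  have "- x + y = - (x - y)" by simp
  thus "ptof (- x + (y::nat\<Rightarrow>'a)) = ptof (x - y)" by (metis ptof_neg)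
  have "- x - y = - (x + y)" by simp
  thus "ptof (- x - (y::nat\<Rightarrow>'a)) = ptof (x + y)" by (metis ptof_neg)
qed


end

context F3
begin

lemma ptof_swap: "ptof (y - x) = ptof (x - (y::nat\<Rightarrow>'a))"
  by (metis minus_diff_eq ptof_neg)

lemma span2_sum:
  assumes "indep2 (x::nat\<Rightarrow>'a) y"
  shows "(\<Sum>v\<in>span2 x y - {0}. (g::_\<Rightarrow>nat) (ptof v)) = 2 * (g (ptof x) + g (ptof y) + g (ptof (x+y)) + g (ptof (x-y)))"
proof -
  have z: "(0::nat\<Rightarrow>'a) = (\<lambda>(s,t). sc s x + sc t y) (0,0)" by simp
  have "span2 x y - {0} = (\<lambda>(s,t). sc s x + sc t y) ` (UNIV - {(0,0)})"
    unfolding span2_img z image_set_diff[OF indep2_inj[OF assms]] by simp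
  hence "(\<Sum>v\<in>span2 x y - {0}. g (ptof v)) = (\<Sum>p\<in>UNIV - {(0,0)}. g (ptof ((\<lambda>(s,t). sc s x + sc t y) p)))"
    using sum.reindex[OF inj_on_subset[OF indep2_inj[OF assms], of "UNIV - {(0,0)}"]] by simp
  also have "\<dots> = 2 * (g (ptof x) + g (ptof y) + g (ptof (x+y)) + g (ptof (x-y)))"
    unfolding UNIV2_minus by (simp add: ptof_swap)
  finally show ?thesis .
qed

lemma span2_sub: "x \<in> vecs N \<Longrightarrow> y \<in> vecs N \<Longrightarrow> span2 x y \<subseteq> vecs N"
  by (auto simp: span2_def)

lemma span2_cl: "v \<in> span2 x y \<Longrightarrow> sc c v \<in> span2 x y"
  by (auto simp: span2_def) (metis sc_simps(5) sc_simps(6))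

lemma mult_line:
  assumes "x \<in> vecs 3" "y \<in> vecs 3" "indep2 (x::nat\<Rightarrow>'a) y"
  shows "mult_of 3 K (span2 x y) = K (ptof x) + K (ptof y) + K (ptof (x+y)) + K (ptof (x-y))"
  using mult_vec[OF span2_sub[OF assms(1,2)] span2_cl, of K] span2_sum[OF assms(3), of K] by simp

definition valid :: "((nat \<Rightarrow> 'a) set \<Rightarrow> nat) \<Rightarrow> nat \<Rightarrow> bool" where
  "valid K w \<longleftrightarrow> (\<forall>x y. x \<in> vecs 3 \<longrightarrow> y \<in> vecs 3 \<longrightarrow> indep2 x y \<longrightarrow>
      K (ptof x) + K (ptof y) + K (ptof (x+y)) + K (ptof (x-y)) \<le> w)"

lemma valid_iff: "(\<forall>S. proj_subspace 3 1 S \<longrightarrow> mult_of 3 K S \<le> w) \<longleftrightarrow> valid K w"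
proof
  assume h: "\<forall>S. proj_subspace 3 1 S \<longrightarrow> mult_of 3 K S \<le> w"
  show "valid K w" unfolding valid_def
  proof (intro allI impI)
    fix x y assume xy: "x \<in> vecs 3" "y \<in> vecs 3" "indep2 (x::nat\<Rightarrow>'a) y"
    hence "proj_subspace 3 1 (span2 x y)" unfolding lines_eq by blast
    hence "mult_of 3 K (span2 x y) \<le> w" using h by blast
    thus "K (ptof x) + K (ptof y) + K (ptof (x+y)) + K (ptof (x-y)) \<le> w" using mult_line[OF xy] by simp
  qed
next
  assume "valid K w"
  thus "\<forall>S. proj_subspace 3 1 S \<longrightarrow> mult_of 3 K S \<le> w"
    unfolding valid_def lines_eq using mult_line by auto
qed

end

context F3 begin

lemma sum_UNIV3: "(\<Sum>c\<in>(UNIV::'a set). f c) = f 0 + f 1 + f (-1)"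
  unfolding UNIV3 by (simp add: add.assoc)

definition G :: "((nat \<Rightarrow> 'a) set \<Rightarrow> nat) \<Rightarrow> (nat \<Rightarrow> 'a) \<Rightarrow> nat" where
  "G K v = (if v = 0 then 0 else K (ptof v))"

lemma msize_G: "2 * msize 3 K = (\<Sum>x\<in>vecs 3. G K x)"
proof -
  have "(\<Sum>x\<in>vecs 3. G K x) = G K 0 + (\<Sum>x\<in>vecs 3 - {0}. G K x)"
    by (rule sum.remove[OF finite_vecs]) simp
  also have "\<dots> = (\<Sum>x\<in>vecs 3 - {0::nat\<Rightarrow>'a}. K (ptof x))"
    by (simp add: G_def)
  finally show ?thesis using msize_vec[of K] by simp
qed

lemma vec_nz_coord: "u \<in> vecs 3 \<Longrightarrow> u \<noteq> 0 \<Longrightarrow> \<exists>i\<le>3. u i \<noteq> 0"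
  by (auto simp: vecs_def fun_eq_iff) (metis not_le)

lemma H1_Zs: "i \<le> 3 \<Longrightarrow> {y\<in>vecs 3. y i = 0} = Zs ({0..3} - {i})"
  by (auto simp: vecs_def Zs_def)

lemma card_H1: "i \<le> (3::nat) \<Longrightarrow> card {y\<in>vecs 3. y i = (0::'a)} = 27"
proof -
  assume i: "i \<le> 3"
  have "card ({0..3::nat} - {i}) = 3" using i by (simp add: card_Diff_singleton)
  thus ?thesis unfolding H1_Zs[OF i] by (simp add: card_Zs card3)
qed

lemma upper_point:
  assumes v: "valid K w" and u: "u \<in> vecs 3" "u \<noteq> (0::nat\<Rightarrow>'a)"
  shows "msize 3 K + 12 * K (ptof u) \<le> 13 * w"
proof -
  obtain i where i: "i \<le> 3" "u i \<noteq> 0" using vec_nz_coord[OF u] by blast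
  define H where "H = {y\<in>vecs 3. y i = (0::'a)}"
  have cH: "card H = 27" unfolding H_def using card_H1[OF i(1)] .
  have fH: "finite H" using cH by (metis card.infinite zero_neq_numeral)
  have H0: "0 \<in> H" by (simp add: H_def)
  define \<Phi> where "\<Phi> = (\<lambda>(a::'a, h). sc a u + h)"
  have bij: "bij_betw \<Phi> (UNIV \<times> H) (vecs 3)"
  proof (rule bij_betw_byWitness[where f'="\<lambda>x. (x i / u i, x - sc (x i / u i) u)"])
    show "\<forall>p\<in>UNIV \<times> H. (\<lambda>x. (x i / u i, x - sc (x i / u i) u)) (\<Phi> p) = p"
      using i(2) by (auto simp: \<Phi>_def H_def)
    show "\<forall>x\<in>vecs 3. \<Phi> ((\<lambda>x. (x i / u i, x - sc (x i / u i) u)) x) = x"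
      by (simp add: \<Phi>_def)
    show "\<Phi> ` (UNIV \<times> H) \<subseteq> vecs 3"
      using u(1) by (auto simp: \<Phi>_def H_def)
    show "(\<lambda>x. (x i / u i, x - sc (x i / u i) u)) ` vecs 3 \<subseteq> UNIV \<times> H"
      using u(1) i(2) by (auto simp: H_def)
  qed
  define R where "R h = (\<Sum>a\<in>(UNIV::'a set). G K (sc a u + h))" for h
  have "2 * msize 3 K = (\<Sum>p\<in>UNIV \<times> H. G K (\<Phi> p))"
    unfolding msize_G by (rule sum.reindex_bij_betw[OF bij, symmetric])
  also have "\<dots> = (\<Sum>a\<in>(UNIV::'a set). \<Sum>h\<in>H. G K (sc a u + h))"
    unfolding \<Phi>_def by (simp add: sum.cartesian_product split_beta)
  also have "\<dots> = (\<Sum>h\<in>H. R h)"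
    unfolding R_def by (rule sum.swap)
  also have "\<dots> = R 0 + (\<Sum>h\<in>H - {0}. R h)"
    by (rule sum.remove[OF fH H0])
  finally have eq: "2 * msize 3 K = R 0 + (\<Sum>h\<in>H - {0}. R h)" .
  have R0: "R 0 = 2 * K (ptof u)"
    unfolding R_def sum_UNIV3 using u(2) neg_ne[OF u(2)] by (simp add: G_def)
  have Rh: "K (ptof u) + R h \<le> w" if h: "h \<in> H - {0}" for h
  proof -
    have hv: "h \<in> vecs 3" "h i = 0" "h \<noteq> 0" using h by (auto simp: H_def)
    have ind: "indep2 u h" unfolding indep2_def
    proof (intro allI impI)
      fix s t assume e: "sc s u + sc t h = 0"
      hence "s * u i = 0" using hv(2) by (metis add.right_neutral mult_zero_right sc_simps(10) zero_fun_apply plus_fun_apply)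
      hence s: "s = 0" using i(2) by simp
      hence "sc t h = 0" using e by simp
      thus "s = 0 \<and> t = 0" using s hv(3) by (simp add: sc_eq0)
    qed
    have nz: "u + h \<noteq> 0" "- u + h \<noteq> 0"
      using ind unfolding indep2_def
      by (metis sc_simps(2) one_neq_zero, metis sc_simps(2) sc_simps(3) one_neq_zero)
    have "R h = K (ptof h) + K (ptof (u + h)) + K (ptof (u - h))"
      unfolding R_def sum_UNIV3 using hv(3) nz by (simp add: G_def ptof_swap add.commute)
    thus ?thesis using v u(1) hv(1) ind unfolding valid_def by fastforce
  qed
  have "(\<Sum>h\<in>H - {0}. R h) \<le> (\<Sum>h\<in>H - {0}. w - K (ptof u))"
    by (rule sum_mono) (use Rh in fastforce)
  also have "\<dots> = 26 * (w - K (ptof u))" using cH H0 fH by (simp add: card_Diff_singleton)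
  finally have "2 * msize 3 K \<le> 2 * K (ptof u) + 26 * (w - K (ptof u))" using eq R0 by simp
  moreover have "K (ptof u) \<le> w"
  proof -
    have "card (H - {0}) = 26" using cH H0 fH by (simp add: card_Diff_singleton)
    hence "H - {0} \<noteq> {}" by (metis card.empty zero_neq_numeral)
    then obtain h where "h \<in> H - {0}" by blast
    thus ?thesis using Rh by fastforce
  qed
  ultimately show ?thesis by linarith
qed

end


definition U :: "nat \<Rightarrow> nat" where
  "U w = (if w mod 4 = 0 then 10*w else if w mod 4 = 1 then 10*w - 9 else if w mod 4 = 2 then 10*w - 6 else 10*w - 3)"

lemma U_arith: "(n::nat) \<le> 40 * M \<Longrightarrow> n + 12 * M \<le> 13 * w \<Longrightarrow> n \<le> U w"
proof -
  assume a: "n \<le> 40 * M" "n + 12 * M \<le> 13 * w"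
  define k where "k = w div 4"
  have w: "w = 4 * k + w mod 4" unfolding k_def by simp
  have "w mod 4 < 4" by simp
  hence "w mod 4 = 0 \<or> w mod 4 = 1 \<or> w mod 4 = 2 \<or> w mod 4 = 3" by linarith
  thus ?thesis
  proof (elim disjE)
    assume r: "w mod 4 = 0"
    show ?thesis
    proof (cases "M + 1 \<le> k")
      case True thus ?thesis using a w r by (simp add: U_def)
    next
      case False thus ?thesis using a w r by (simp add: U_def)
    qed
  next
    assume r: "w mod 4 = 1"
    show ?thesis
    proof (cases "M \<le> k")
      case True thus ?thesis using a w r by (simp add: U_def)
    next
      case False thus ?thesis using a w r by (simp add: U_def)
    qed
  next
    assume r: "w mod 4 = 2"
    show ?thesis
    proof (cases "M \<le> k")
      case True thus ?thesis using a w r by (simp add: U_def)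
    next
      case False thus ?thesis using a w r by (simp add: U_def)
    qed
  next
    assume r: "w mod 4 = 3"
    show ?thesis
    proof (cases "M \<le> k")
      case True thus ?thesis using a w r by (simp add: U_def)
    next
      case False thus ?thesis using a w r by (simp add: U_def)
    qed
  qed
qed

context F3 begin

lemma card_Vstar: "card (vecs 3 - {0::nat\<Rightarrow>'a}) = 80"
  using card_vecs3 by (simp add: card_Diff_singleton)

lemma upper_gen:
  assumes v: "valid K w"
  shows "msize 3 K \<le> U w"
proof -
  define A where "A = (\<lambda>x. K (ptof x)) ` (vecs 3 - {0::nat\<Rightarrow>'a})"
  have fA: "finite A" unfolding A_def using finite_vecs by blast
  have "vecs 3 - {0::nat\<Rightarrow>'a} \<noteq> {}" using card_Vstar by (metis card.empty zero_neq_numeral)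
  hence nA: "A \<noteq> {}" unfolding A_def by blast
  define M where "M = Max A"
  have "M \<in> A" unfolding M_def using Max_in[OF fA nA] .
  then obtain u where u: "u \<in> vecs 3 - {0::nat\<Rightarrow>'a}" "K (ptof u) = M"
    unfolding A_def by blast
  have le: "K (ptof x) \<le> M" if "x \<in> vecs 3 - {0}" for x
    unfolding M_def A_def using fA A_def that by (simp add: A_def)
  have "2 * msize 3 K \<le> (\<Sum>x\<in>vecs 3 - {0::nat\<Rightarrow>'a}. M)"
    unfolding msize_vec by (rule sum_mono) (rule le)
  hence "2 * msize 3 K \<le> 80 * M" using card_Vstar by simp
  moreover have "msize 3 K + 12 * M \<le> 13 * w" using upper_point[OF v, of u] u by auto
  ultimately show ?thesis using U_arith by simp
qed

end


definition e0 :: "nat \<Rightarrow> 'a::field" where "e0 = (\<lambda>i. if i = 0 then 1 else 0)"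

definition KC :: "nat \<Rightarrow> nat \<Rightarrow> nat \<Rightarrow> (nat \<Rightarrow> 'a::field) set \<Rightarrow> nat" where
  "KC a b c P = a + (if P = ptof e0 then b else 0) + (if (\<exists>v\<in>P. v 0 \<noteq> 0) then c else 0)"

context F3 begin

lemma ex_coord0: "(\<exists>v\<in>ptof x. v 0 \<noteq> 0) \<longleftrightarrow> x 0 \<noteq> (0::'a)"
  unfolding ptof_eq by auto

lemma KC_ptof: "KC a b c (ptof x) = a + (if ptof x = ptof (e0::nat\<Rightarrow>'a) then b else 0) + (if x 0 \<noteq> (0::'a) then c else 0)"
  unfolding KC_def ex_coord0 ..

lemma indep2_nz:
  assumes "indep2 (x::nat\<Rightarrow>'a) y"
  shows "x \<noteq> 0" "y \<noteq> 0" "x + y \<noteq> 0" "x - y \<noteq> 0"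
  using assms unfolding indep2_def
  by (metis sc_simps(1,2) add.right_neutral one_neq_zero,
      metis sc_simps(1,2) add.left_neutral one_neq_zero,
      metis sc_simps(2) one_neq_zero,
      metis sc_simps(2,3) diff_conv_add_uminus one_neq_zero)

lemma sc_lin: "sc a x + sc b y - (sc c x + sc d y) = sc (a - c) (x::nat\<Rightarrow>'a) + sc (b - d) y"
   "sc a x + sc b y + (sc c x + sc d y) = sc (a + c) (x::nat\<Rightarrow>'a) + sc (b + d) y"
  by (auto simp: sc_def fun_eq_iff algebra_simps)

lemma ptof_lin_ne:
  assumes i: "indep2 (x::nat\<Rightarrow>'a) y" and ne: "a \<noteq> 0 \<or> b \<noteq> 0" "c \<noteq> 0 \<or> d \<noteq> 0"
    "a - c \<noteq> 0 \<or> b - d \<noteq> 0" "a + c \<noteq> 0 \<or> b + d \<noteq> 0"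
  shows "ptof (sc a x + sc b y) \<noteq> ptof (sc c x + sc d y)"
proof
  have rel: "\<And>s t. sc s x + sc t y = 0 \<Longrightarrow> s = 0 \<and> t = 0" using i unfolding indep2_def by blast
  have nz: "sc a x + sc b y \<noteq> 0" "sc c x + sc d y \<noteq> 0" using rel ne(1,2) by blast+
  assume "ptof (sc a x + sc b y) = ptof (sc c x + sc d y)"
  hence "sc a x + sc b y = sc c x + sc d y \<or> sc a x + sc b y = - (sc c x + sc d y)"
    using nz ptof_eq_iff by blast
  hence "sc a x + sc b y - (sc c x + sc d y) = 0 \<or> sc a x + sc b y + (sc c x + sc d y) = 0"
  proof (elim disjE)
    assume "sc a x + sc b y = sc c x + sc d y" thus ?thesis by simp
  next
    assume "sc a x + sc b y = - (sc c x + sc d y)" thus ?thesis by simp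
  qed
  hence "sc (a - c) x + sc (b - d) y = 0 \<or> sc (a + c) x + sc (b + d) y = 0" unfolding sc_lin .
  thus False using rel ne(3,4) by blast
qed

lemma indep2_distinct:
  assumes i: "indep2 (x::nat\<Rightarrow>'a) y"
  shows "ptof x \<noteq> ptof y" "ptof x \<noteq> ptof (x+y)" "ptof x \<noteq> ptof (x-y)"
        "ptof y \<noteq> ptof (x+y)" "ptof y \<noteq> ptof (x-y)" "ptof (x+y) \<noteq> ptof (x-y)"
  using ptof_lin_ne[OF i, of 1 0 0 1] ptof_lin_ne[OF i, of 1 0 1 1] ptof_lin_ne[OF i, of 1 0 1 "-1"]
    ptof_lin_ne[OF i, of 0 1 1 1] ptof_lin_ne[OF i, of 0 1 1 "-1"] ptof_lin_ne[OF i, of 1 1 1 "-1"]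
  by simp_all

end

context F3 begin

lemma nz_cases: "(p::'a) \<noteq> 0 \<Longrightarrow> p = 1 \<or> p = -1"
  using UNIV3 by blast

lemma coord_cases: "(p::'a) \<noteq> 0 \<Longrightarrow> q \<noteq> 0 \<Longrightarrow> p + q \<noteq> 0 \<Longrightarrow> p - q = 0"
  using nz_cases[of p] nz_cases[of q] by auto

lemma ind4: "A \<noteq> B \<Longrightarrow> A \<noteq> C \<Longrightarrow> A \<noteq> D \<Longrightarrow> B \<noteq> C \<Longrightarrow> B \<noteq> D \<Longrightarrow> C \<noteq> D \<Longrightarrow>
  (if A = P then b else 0) + (if B = P then b else 0) + (if C = P then b else 0) + (if D = P then b else 0) \<le> (b::nat)"
  by (cases "A = P"; cases "B = P"; cases "C = P"; cases "D = P") simp_all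

lemma ind_coord: "(if (p::'a) \<noteq> 0 then c else 0) + (if q \<noteq> 0 then c else 0) + (if p + q \<noteq> 0 then c else 0)
   + (if p - q \<noteq> 0 then c else 0) \<le> 3 * (c::nat)"
proof (cases "p \<noteq> 0 \<and> q \<noteq> 0 \<and> p + q \<noteq> 0")
  case True
  hence "p - q = 0" using coord_cases by blast
  thus ?thesis using True by simp
next
  case False
  thus ?thesis by (cases "p = 0"; cases "q = 0"; cases "p + q = 0"; cases "p - q = 0") simp_all
qed

lemma KC_valid: "valid (KC a b c :: (nat\<Rightarrow>'a) set \<Rightarrow> nat) (4*a + b + 3*c)"
  unfolding valid_def
proof (intro allI impI)
  fix x y :: "nat \<Rightarrow> 'a" assume xy: "x \<in> vecs 3" "y \<in> vecs 3" "indep2 x y"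
  note d = indep2_distinct[OF xy(3)]
  have B: "(if ptof x = ptof (e0::nat\<Rightarrow>'a) then b else 0) + (if ptof y = ptof (e0::nat\<Rightarrow>'a) then b else 0)
     + (if ptof (x+y) = ptof (e0::nat\<Rightarrow>'a) then b else 0) + (if ptof (x-y) = ptof (e0::nat\<Rightarrow>'a) then b else 0) \<le> b"
    using ind4[OF d] .
  have C: "(if x 0 \<noteq> 0 then c else 0) + (if y 0 \<noteq> 0 then c else 0)
     + (if (x+y) 0 \<noteq> 0 then c else 0) + (if (x-y) 0 \<noteq> 0 then c else 0) \<le> 3 * c"
    using ind_coord[where p="x 0" and q="y 0" and c=c] by simp
  show "KC a b c (ptof x) + KC a b c (ptof y) + KC a b c (ptof (x + y)) + KC a b c (ptof (x - y)) \<le> 4 * a + b + 3 * c"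
    unfolding KC_ptof using B C by simp
qed

lemma sum_if_card: "finite A \<Longrightarrow> (\<Sum>x\<in>A. if P x then (b::nat) else 0) = b * card {x\<in>A. P x}"
  by (simp add: sum.inter_filter[symmetric])

lemma e0_vec: "(e0::nat\<Rightarrow>'a) \<in> vecs 3" "(e0::nat\<Rightarrow>'a) \<noteq> 0"
  by (auto simp: e0_def vecs_def fun_eq_iff)

lemma card_P0: "card {x\<in>vecs 3 - {0::nat\<Rightarrow>'a}. ptof x = ptof e0} = 2"
proof -
  have "{x\<in>vecs 3 - {0::nat\<Rightarrow>'a}. ptof x = ptof e0} = {e0, - e0}"
    using e0_vec by (auto simp: ptof_eq_iff)
  thus ?thesis using neg_ne[OF e0_vec(2)] by simp
qed

lemma card_X0: "card {x\<in>vecs 3 - {0::nat\<Rightarrow>'a}. x 0 \<noteq> 0} = 54"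
proof -
  have "{x\<in>vecs 3 - {0::nat\<Rightarrow>'a}. x 0 \<noteq> 0} = vecs 3 - {y\<in>vecs 3. y 0 = 0}" by auto
  moreover have "card (vecs 3 - {y\<in>vecs 3. y 0 = (0::'a)}) = 81 - 27"
    using card_vecs3 card_H1[of 0] by (subst card_Diff_subset) (auto intro: finite_subset[OF _ finite_vecs])
  ultimately show ?thesis by simp
qed

lemma KC_size: "msize 3 (KC a b c :: (nat\<Rightarrow>'a) set \<Rightarrow> nat) = 40*a + b + 27*c"
proof -
  have f: "finite (vecs 3 - {0::nat\<Rightarrow>'a})" using finite_vecs by blast
  have "2 * msize 3 (KC a b c :: (nat\<Rightarrow>'a) set \<Rightarrow> nat) = (\<Sum>x\<in>vecs 3 - {0::nat\<Rightarrow>'a}. a)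
     + (\<Sum>x\<in>vecs 3 - {0::nat\<Rightarrow>'a}. if ptof x = ptof e0 then b else 0)
     + (\<Sum>x\<in>vecs 3 - {0::nat\<Rightarrow>'a}. if x 0 \<noteq> 0 then c else 0)"
    unfolding msize_vec KC_ptof by (simp add: sum.distrib)
  also have "\<dots> = 80 * a + 2 * b + 54 * c"
    unfolding sum_if_card[OF f] card_P0 card_X0 using card_Vstar by simp
  finally show ?thesis by simp
qed

lemma lower_gen:
  assumes "w \<ge> 3"
  shows "\<exists>K :: (nat\<Rightarrow>'a) set \<Rightarrow> nat. valid K w \<and> msize 3 K = U w"
proof -
  define k where "k = w div 4"
  have w: "w = 4 * k + w mod 4" unfolding k_def by simp
  have "w mod 4 < 4" by simp
  hence "w mod 4 = 0 \<or> w mod 4 = 1 \<or> w mod 4 = 2 \<or> w mod 4 = 3" by linarith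
  thus ?thesis
  proof (elim disjE)
    assume r: "w mod 4 = 0"
    have "valid (KC k 0 0 :: (nat\<Rightarrow>'a) set \<Rightarrow> nat) w" using KC_valid[of k 0 0] w r by simp
    moreover have "msize 3 (KC k 0 0 :: (nat\<Rightarrow>'a) set \<Rightarrow> nat) = U w" using KC_size w r by (simp add: U_def)
    ultimately show ?thesis by blast
  next
    assume r: "w mod 4 = 1"
    have "valid (KC k 1 0 :: (nat\<Rightarrow>'a) set \<Rightarrow> nat) w" using KC_valid[of k 1 0] w r by simp
    moreover have "msize 3 (KC k 1 0 :: (nat\<Rightarrow>'a) set \<Rightarrow> nat) = U w" using KC_size w r by (simp add: U_def)
    ultimately show ?thesis by blast
  next
    assume r: "w mod 4 = 2"
    have k1: "k \<ge> 1" using w r assms by linarith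
    have e: "4*(k-1) + 0 + 3*2 = w" using w r k1 by linarith
    have "valid (KC (k-1) 0 2 :: (nat\<Rightarrow>'a) set \<Rightarrow> nat) w" using KC_valid[of "k-1" 0 2] unfolding e .
    moreover have "msize 3 (KC (k-1) 0 2 :: (nat\<Rightarrow>'a) set \<Rightarrow> nat) = U w" using KC_size w r k1 by (simp add: U_def)
    ultimately show ?thesis by blast
  next
    assume r: "w mod 4 = 3"
    have "valid (KC k 0 1 :: (nat\<Rightarrow>'a) set \<Rightarrow> nat) w" using KC_valid[of k 0 1] w r by simp
    moreover have "msize 3 (KC k 0 1 :: (nat\<Rightarrow>'a) set \<Rightarrow> nat) = U w" using KC_size w r by (simp add: U_def)
    ultimately show ?thesis by blast
  qed
qed

end

context F3 begin

lemma indep_nonprop: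
  assumes "x \<noteq> 0" "y \<noteq> 0" "y \<noteq> x" "y \<noteq> - (x::nat\<Rightarrow>'a)"
  shows "indep2 x y"
  unfolding indep2_def
proof (intro allI impI)
  fix s t assume e: "sc s x + sc t y = 0"
  have t: "t = 0"
  proof (rule ccontr)
    assume t: "t \<noteq> 0"
    have "y = sc (- s / t) x"
    proof
      fix j
      have "s * x j + t * y j = 0" using e by (metis sc_simps(10) plus_fun_apply zero_fun_apply)
      thus "y j = sc (- s / t) x j" using t by (simp add: field_simps) (metis add.commute add_eq_0_iff mult.commute)
    qed
    thus False using sc_cases[of "- s / t" x] assms by auto
  qed
  hence "sc s x = 0" using e by simp
  thus "s = 0 \<and> t = 0" using t assms(1) by (simp add: sc_eq0)
qed

lemma col3:
  assumes v: "valid K 2" and xy: "x \<in> vecs 3" "y \<in> vecs 3" "indep2 (x::nat\<Rightarrow>'a) y"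
    and c: "c1 \<noteq> 0" "c2 \<noteq> 0"
    and k: "K (ptof x) \<ge> 1" "K (ptof y) \<ge> 1" "K (ptof (sc c1 x + sc c2 y)) \<ge> 1"
  shows False
proof -
  have le: "K (ptof x) + K (ptof y) + K (ptof (x+y)) + K (ptof (x-y)) \<le> 2"
    using v xy unfolding valid_def by blast
  have "ptof (sc c1 x + sc c2 y) = ptof (x+y) \<or> ptof (sc c1 x + sc c2 y) = ptof (x-y)"
  proof -
    have "sc c1 x + sc c2 y = x + y \<or> sc c1 x + sc c2 y = x - y \<or>
          sc c1 x + sc c2 y = - (x - y) \<or> sc c1 x + sc c2 y = - (x + y)"
      using nz_cases[OF c(1)] nz_cases[OF c(2)] by (auto simp: fun_eq_iff)
    thus ?thesis by (metis ptof_neg)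
  qed
  thus False using le k by auto
qed

lemma sum3_distinct: "(p::'a) \<noteq> q \<Longrightarrow> p \<noteq> r \<Longrightarrow> q \<noteq> r \<Longrightarrow> p + q + r = 0"
proof -
  assume d: "p \<noteq> q" "p \<noteq> r" "q \<noteq> r"
  have "p \<in> {0,1,-1}" "q \<in> {0,1,-1}" "r \<in> {0,1,-1}" using UNIV3 by blast+
  thus ?thesis using d by auto
qed

end

context F3 begin

lemma card_H2: "i \<le> 3 \<Longrightarrow> j \<le> 3 \<Longrightarrow> i \<noteq> j \<Longrightarrow> card {y\<in>vecs 3. y i = (0::'a) \<and> y j = 0} = 9"
proof -
  assume ij: "i \<le> 3" "j \<le> 3" "i \<noteq> j"
  have e: "{y\<in>vecs 3. y i = (0::'a) \<and> y j = 0} = Zs ({0..3} - {i,j})"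
    using ij by (auto simp: vecs_def Zs_def)
  have "card ({0..3::nat} - {i,j}) = 2" using ij by (simp add: card_Diff_subset)
  thus ?thesis unfolding e by (simp add: card_Zs card3)
qed

lemma trip: "(y::'a) + y + y = 0"
proof -
  have "y + y + y = (1 + 1 + 1) * y" by (simp add: algebra_simps)
  also have "(1 + 1 + 1::'a) = 3" by simp
  finally show ?thesis by simp
qed

lemma cap_core:
  assumes v: "valid K 2" and le1: "\<forall>x\<in>vecs 3 - {0}. K (ptof x) \<le> 1"
   and a: "a \<in> vecs 3" "K (ptof a) = 1" and b: "b \<in> vecs 3" "K (ptof b) = 1"
   and ab: "indep2 (a::nat\<Rightarrow>'a) b"
  shows "msize 3 K \<le> 10"
proof -
  have rel: "\<And>s t. sc s a + sc t b = 0 \<Longrightarrow> s = 0 \<and> t = 0" using ab unfolding indep2_def by blast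
  have anz: "a \<noteq> 0" using indep2_nz[OF ab] by simp
  obtain i where i: "i \<le> 3" "a i \<noteq> 0" using vec_nz_coord[OF a(1) anz] by blast
  define b' where "b' = b + sc (- (b i / a i)) a"
  have b'v: "b' \<in> vecs 3" using a b by (simp add: b'_def)
  have b'nz: "b' \<noteq> 0"
  proof
    assume "b' = 0" hence "sc (- (b i / a i)) a + sc 1 b = 0" by (simp add: b'_def add.commute)
    thus False using rel by fastforce
  qed
  have b'i: "b' i = 0" using i by (simp add: b'_def)
  obtain j where j: "j \<le> 3" "b' j \<noteq> 0" using vec_nz_coord[OF b'v b'nz] by blast
  have ij: "i \<noteq> j" using b'i j by auto
  define D where "D = a i * b j - a j * b i"
  have DD: "D = a i * b' j" using i by (simp add: D_def b'_def field_simps)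
  have Dnz: "D \<noteq> 0" using DD i j by simp
  define H where "H = {y\<in>vecs 3. y i = (0::'a) \<and> y j = 0}"
  have cH: "card H = 9" unfolding H_def by (rule card_H2[OF i(1) j(1) ij])
  have fH: "finite H" using cH by (metis card.infinite zero_neq_numeral)
  have H0: "0 \<in> H" by (simp add: H_def)
  define al where "al x = (x i * b j - x j * b i) / D" for x :: "nat \<Rightarrow> 'a"
  define be where "be x = (a i * x j - a j * x i) / D" for x :: "nat \<Rightarrow> 'a"
  define pr where "pr x = x - sc (al x) a - sc (be x) b" for x
  define \<Phi> where "\<Phi> = (\<lambda>((s::'a, t::'a), h). sc s a + sc t b + h)"
  have al_eq: "al (sc s a + sc t b + h) = s" if "h \<in> H" for s t h
  proof -
    have "((sc s a + sc t b + h) i * b j - (sc s a + sc t b + h) j * b i) = s * D"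
      using that by (simp add: H_def D_def algebra_simps)
    thus ?thesis unfolding al_def using Dnz by simp
  qed
  have be_eq: "be (sc s a + sc t b + h) = t" if "h \<in> H" for s t h
  proof -
    have "(a i * (sc s a + sc t b + h) j - a j * (sc s a + sc t b + h) i) = t * D"
      using that by (simp add: H_def D_def algebra_simps)
    thus ?thesis unfolding be_def using Dnz by simp
  qed
  have pr_i: "pr x i = 0" and pr_j: "pr x j = 0" for x
  proof -
    have "(x i * b j - x j * b i) * a i + (a i * x j - a j * x i) * b i = x i * D"
      by (simp add: D_def algebra_simps)
    hence "al x * a i + be x * b i = x i" unfolding al_def be_def using Dnz
      by (simp add: add_divide_distrib[symmetric])
    thus "pr x i = 0" by (simp add: pr_def) (metis add_diff_cancel_left')
    have "(x i * b j - x j * b i) * a j + (a i * x j - a j * x i) * b j = x j * D"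
      by (simp add: D_def algebra_simps)
    hence "al x * a j + be x * b j = x j" unfolding al_def be_def using Dnz
      by (simp add: add_divide_distrib[symmetric])
    thus "pr x j = 0" by (simp add: pr_def) (metis add_diff_cancel_left')
  qed
  have bij: "bij_betw \<Phi> ((UNIV \<times> UNIV) \<times> H) (vecs 3)"
  proof (rule bij_betw_byWitness[where f'="\<lambda>x. ((al x, be x), pr x)"])
    show "\<forall>q\<in>(UNIV \<times> UNIV) \<times> H. ((al (\<Phi> q), be (\<Phi> q)), pr (\<Phi> q)) = q"
      using al_eq be_eq by (auto simp: \<Phi>_def pr_def)
    show "\<forall>x\<in>vecs 3. \<Phi> ((al x, be x), pr x) = x"
      by (simp add: \<Phi>_def pr_def)
    show "\<Phi> ` ((UNIV \<times> UNIV) \<times> H) \<subseteq> vecs 3"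
      using a(1) b(1) by (auto simp: \<Phi>_def H_def)
    show "(\<lambda>x. ((al x, be x), pr x)) ` vecs 3 \<subseteq> (UNIV \<times> UNIV) \<times> H"
      using a(1) b(1) pr_i pr_j by (auto simp: H_def pr_def)
  qed
  have uniq: "s = 0 \<and> t = 0 \<and> sc c h = 0" if h: "h \<in> H" and e: "sc s a + sc t b + sc c h = 0" for s t c h
  proof -
    have ch: "sc c h \<in> H" using h by (auto simp: H_def)
    have a0: "al 0 = 0" using al_eq[OF H0, of 0 0] by simp
    have b0: "be 0 = 0" using be_eq[OF H0, of 0 0] by simp
    have s: "s = 0" using al_eq[OF ch, of s t] e a0 by simp
    have t: "t = 0" using be_eq[OF ch, of s t] e b0 by simp
    show ?thesis using s t e by simp
  qed
  define F where "F h = (\<Sum>p\<in>(UNIV::('a\<times>'a) set). G K (\<Phi> (p, h)))" for h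
  have "2 * msize 3 K = (\<Sum>q\<in>(UNIV \<times> UNIV) \<times> H. G K (\<Phi> q))"
    unfolding msize_G by (rule sum.reindex_bij_betw[OF bij, symmetric])
  also have "\<dots> = (\<Sum>p\<in>(UNIV::('a\<times>'a) set). \<Sum>h\<in>H. G K (\<Phi> (p, h)))"
    by (simp add: sum.cartesian_product)
  also have "\<dots> = (\<Sum>h\<in>H. F h)"
    unfolding F_def by (rule sum.swap)
  also have "\<dots> = F 0 + (\<Sum>h\<in>H - {0}. F h)"
    by (rule sum.remove[OF fH H0])
  finally have eq: "2 * msize 3 K = F 0 + (\<Sum>h\<in>H - {0}. F h)" .
  have F0: "F 0 \<le> 4"
  proof -
    define f where "f = (\<lambda>(s::'a,t::'a). sc s a + sc t b)"
    have inj: "inj f" unfolding f_def by (rule indep2_inj[OF ab])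
    have fsp: "finite (span2 a b)" using span2_sub[OF a(1) b(1)] finite_vecs finite_subset by blast
    have "F 0 = (\<Sum>p\<in>UNIV. G K (f p))" unfolding F_def f_def \<Phi>_def by (simp add: split_beta)
    also have "\<dots> = (\<Sum>v\<in>span2 a b. G K v)"
      unfolding span2_img f_def[symmetric] by (rule sum.reindex[OF inj, symmetric, simplified comp_def])
    also have "\<dots> = G K 0 + (\<Sum>v\<in>span2 a b - {0}. G K v)"
    proof -
      have z: "0 \<in> span2 a b" unfolding span2_def
        by (rule CollectI, rule exI[of _ 0], rule exI[of _ 0]) simp
      show ?thesis by (rule sum.remove[OF fsp z])
    qed
    also have "\<dots> = (\<Sum>v\<in>span2 a b - {0}. K (ptof v))"
      by (simp add: G_def)
    also have "\<dots> = 2 * (K (ptof a) + K (ptof b) + K (ptof (a+b)) + K (ptof (a-b)))"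
      by (rule span2_sum[OF ab])
    also have "\<dots> \<le> 4" using v a(1) b(1) ab unfolding valid_def by fastforce
    finally show ?thesis .
  qed
  have Fh: "F h \<le> 2" if hH: "h \<in> H - {0}" for h
  proof -
    have hH': "h \<in> H" "h \<noteq> 0" using hH by auto
    have nz: "\<Phi> (p, h) \<noteq> 0" for p
    proof
      assume "\<Phi> (p, h) = 0"
      hence "sc (fst p) a + sc (snd p) b + sc 1 h = 0" by (simp add: \<Phi>_def split_beta)
      thus False using uniq[OF hH'(1)] hH'(2) by fastforce
    qed
    have inV: "\<Phi> (p, h) \<in> vecs 3" for p using hH'(1) a(1) b(1) by (auto simp: \<Phi>_def H_def split_beta)
    define T where "T = {p. K (ptof (\<Phi> (p, h))) = 1}"
    have GT: "G K (\<Phi> (p, h)) = (if p \<in> T then 1 else 0)" for p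
    proof -
      have "K (ptof (\<Phi> (p, h))) \<le> 1" using le1 nz[of p] inV[of p] by blast
      thus ?thesis using nz[of p] by (cases "K (ptof (\<Phi> (p, h))) = 1") (auto simp: G_def T_def)
    qed
    have FT: "F h = card T"
      unfolding F_def GT using sum_if_card[of UNIV "\<lambda>p. p \<in> T" 1] by simp
    have KT: "K (ptof (\<Phi> (p, h))) \<ge> 1" if "p \<in> T" for p using that unfolding T_def by simp
    have lin: "sc s (\<Phi> (p, h)) + sc t (\<Phi> (q, h)) = sc (s * fst p + t * fst q) a + sc (s * snd p + t * snd q) b + sc (s + t) h" for s t p q
      by (simp add: \<Phi>_def split_beta fun_eq_iff algebra_simps)
    have ind: "indep2 (\<Phi> (p, h)) (\<Phi> (q, h))" if "p \<noteq> q" for p q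
      unfolding indep2_def
    proof (intro allI impI)
      fix s t assume "sc s (\<Phi> (p, h)) + sc t (\<Phi> (q, h)) = 0"
      hence u: "s * fst p + t * fst q = 0" "s * snd p + t * snd q = 0" "sc (s + t) h = 0"
        using uniq[OF hH'(1)] unfolding lin by blast+
      have "s + t = 0" using u(3) hH'(2) sc_eq0 by blast
      hence st: "t = - s" by (simp only: add_eq_0_iff)
      have "s * (fst p - fst q) = 0" "s * (snd p - snd q) = 0" using u(1,2) st by (simp_all add: algebra_simps)
      moreover have "fst p \<noteq> fst q \<or> snd p \<noteq> snd q" using that by (metis prod_eqI)
      ultimately have "s = 0" by auto
      thus "s = 0 \<and> t = 0" using st by simp
    qed
    have same1: False if "p \<in> T" "q \<in> T" "p \<noteq> q" "fst p = fst q" for p q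
    proof -
      define d where "d = snd p - snd q"
      have d: "d \<noteq> 0" using that(3,4) unfolding d_def by (metis eq_iff_diff_eq_0 prod_eqI)
      have "sc (1/d) (\<Phi> (p, h)) + sc (- (1/d)) (\<Phi> (q, h)) = b"
        using lin[of "1/d" p "- (1/d)" q] that(4) d unfolding d_def
        by (simp add: algebra_simps diff_divide_distrib[symmetric])
      thus False using col3[OF v inV inV ind[OF that(3)], of "1/d" "- (1/d)"] d KT[OF that(1)] KT[OF that(2)] b(2) by simp
    qed
    have same2: False if "p \<in> T" "q \<in> T" "p \<noteq> q" "snd p = snd q" for p q
    proof -
      define d where "d = fst p - fst q"
      have d: "d \<noteq> 0" using that(3,4) unfolding d_def by (metis eq_iff_diff_eq_0 prod_eqI)
      have "sc (1/d) (\<Phi> (p, h)) + sc (- (1/d)) (\<Phi> (q, h)) = a"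
        using lin[of "1/d" p "- (1/d)" q] that(4) d unfolding d_def
        by (simp add: algebra_simps diff_divide_distrib[symmetric])
      thus False using col3[OF v inV inV ind[OF that(3)], of "1/d" "- (1/d)"] d KT[OF that(1)] KT[OF that(2)] a(2) by simp
    qed
    have three: False if "p1 \<in> T" "p2 \<in> T" "p3 \<in> T" "p1 \<noteq> p2" "p1 \<noteq> p3" "p2 \<noteq> p3" for p1 p2 p3
    proof -
      have f: "fst p1 \<noteq> fst p2" "fst p1 \<noteq> fst p3" "fst p2 \<noteq> fst p3"
        using same1 that by metis+
      have g: "snd p1 \<noteq> snd p2" "snd p1 \<noteq> snd p3" "snd p2 \<noteq> snd p3"
        using same2 that by metis+
      have s1: "fst p1 + fst p2 + fst p3 = 0" using sum3_distinct f by blast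
      have s2: "snd p1 + snd p2 + snd p3 = 0" using sum3_distinct g by blast
      have "\<Phi> (p1, h) + \<Phi> (p2, h) + \<Phi> (p3, h) = sc (fst p1 + fst p2 + fst p3) a + sc (snd p1 + snd p2 + snd p3) b"
        by (simp add: \<Phi>_def split_beta fun_eq_iff algebra_simps trip)
      hence "\<Phi> (p1, h) + \<Phi> (p2, h) + \<Phi> (p3, h) = 0" using s1 s2 by simp
      hence "\<Phi> (p3, h) = - (\<Phi> (p1, h) + \<Phi> (p2, h))" by (simp only: add_eq_0_iff)
      hence "sc (-1) (\<Phi> (p1, h)) + sc (-1) (\<Phi> (p2, h)) = \<Phi> (p3, h)" by simp
      thus False using col3[OF v inV inV ind[OF that(4)], of "-1" "-1"] KT[OF that(1)] KT[OF that(2)] KT[OF that(3)] by simp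
    qed
    have "card T \<le> 2"
    proof (rule ccontr)
      assume "\<not> card T \<le> 2"
      hence c3: "card T \<ge> 3" by simp
      have fT: "finite T" by simp
      obtain p1 where p1: "p1 \<in> T" using c3 by (metis card.empty ex_in_conv not_numeral_le_zero)
      have "card (T - {p1}) \<ge> 2" using c3 p1 fT by (simp add: card_Diff_singleton)
      then obtain p2 where p2: "p2 \<in> T - {p1}" by (metis card.empty ex_in_conv not_numeral_le_zero)
      have "card (T - {p1} - {p2}) \<ge> 1" using c3 p1 p2 fT by (simp add: card_Diff_singleton)
      then obtain p3 where p3: "p3 \<in> T - {p1} - {p2}" by (metis card.empty ex_in_conv not_one_le_zero)
      show False using three[of p1 p2 p3] p1 p2 p3 by blast
    qed
    thus ?thesis using FT by simp
  qed
  have "(\<Sum>h\<in>H - {0}. F h) \<le> (\<Sum>h\<in>H - {0}. 2)" by (rule sum_mono) (rule Fh)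
  also have "\<dots> = 16" using cH H0 fH by (simp add: card_Diff_singleton)
  finally show ?thesis using eq F0 by linarith
qed

end

context F3 begin

lemma cap_upper:
  assumes v: "valid K 2"
  shows "msize 3 (K :: (nat\<Rightarrow>'a) set \<Rightarrow> nat) \<le> 10"
proof (cases "\<exists>u\<in>vecs 3 - {0::nat\<Rightarrow>'a}. K (ptof u) \<ge> 2")
  case True
  then obtain u where u: "u \<in> vecs 3" "u \<noteq> 0" "K (ptof u) \<ge> 2" by blast
  have "msize 3 K + 12 * K (ptof u) \<le> 13 * 2" using upper_point[OF v u(1,2)] .
  thus ?thesis using u(3) by linarith
next
  case False
  have le1: "\<forall>x\<in>vecs 3 - {0}. K (ptof x) \<le> 1"
  proof
    fix x assume "x \<in> vecs 3 - {0::nat\<Rightarrow>'a}"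
    hence "\<not> K (ptof x) \<ge> 2" using False by blast
    thus "K (ptof x) \<le> 1" by linarith
  qed
  define C where "C = {x\<in>vecs 3 - {0::nat\<Rightarrow>'a}. K (ptof x) = 1}"
  show ?thesis
  proof (cases "\<exists>a\<in>C. \<exists>b\<in>C. b \<noteq> a \<and> b \<noteq> - a")
    case True
    then obtain a b where ab: "a \<in> C" "b \<in> C" "b \<noteq> a" "b \<noteq> - a" by blast
    have "indep2 a b" using ab by (intro indep_nonprop) (auto simp: C_def)
    thus ?thesis using cap_core[OF v le1, of a b] ab by (auto simp: C_def)
  next
    case False
    have fV: "finite (vecs 3 - {0::nat\<Rightarrow>'a})" using finite_vecs by blast
    have cC: "card C \<le> 2"
    proof (cases "C = {}")
      case True thus ?thesis by simp
    next
      case False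
      then obtain a where a: "a \<in> C" by blast
      have "C \<subseteq> {a, - a}" using \<open>\<not> (\<exists>a\<in>C. \<exists>b\<in>C. b \<noteq> a \<and> b \<noteq> - a)\<close> a by blast
      hence "card C \<le> card {a, - a}" by (rule card_mono[rotated]) simp
      also have "\<dots> \<le> 2" by (rule card_insert_le_m1) simp_all
      finally show ?thesis .
    qed
    have "2 * msize 3 K = (\<Sum>x\<in>vecs 3 - {0::nat\<Rightarrow>'a}. if K (ptof x) = 1 then 1 else 0)"
      unfolding msize_vec
    proof (rule sum.cong[OF refl])
      fix x assume "x \<in> vecs 3 - {0::nat\<Rightarrow>'a}"
      hence "K (ptof x) \<le> 1" using le1 by blast
      thus "K (ptof x) = (if K (ptof x) = 1 then 1 else 0)" by auto
    qed
    also have "\<dots> = card C" unfolding C_def using sum_if_card[OF fV, of "\<lambda>x. K (ptof x) = 1" 1] by simp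
    finally show ?thesis using cC by linarith
  qed
qed

lemma mmax_eq:
  assumes up: "\<And>K. valid (K :: (nat\<Rightarrow>'a) set \<Rightarrow> nat) w \<Longrightarrow> msize 3 K \<le> m"
    and ex: "valid (K0 :: (nat\<Rightarrow>'a) set \<Rightarrow> nat) w" "msize 3 K0 = m"
  shows "m_max TYPE('a) 1 3 w = m"
proof -
  define A where "A = {msize 3 K | K :: (nat\<Rightarrow>'a) set \<Rightarrow> nat. \<forall>S. proj_subspace 3 1 S \<longrightarrow> mult_of 3 K S \<le> w}"
  have A: "A = {msize 3 K | K :: (nat\<Rightarrow>'a) set \<Rightarrow> nat. valid K w}" unfolding A_def valid_iff ..
  have "A \<subseteq> {..m}" unfolding A using up by auto
  hence fA: "finite A" by (rule finite_subset) simp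
  have "Max A = m"
  proof (rule Max_eqI[OF fA])
    show "y \<le> m" if "y \<in> A" for y using that up unfolding A by auto
    show "m \<in> A" unfolding A using ex by auto
  qed
  thus ?thesis unfolding m_max_def A_def .
qed

end


definition Qf :: "(nat \<Rightarrow> 'a::field) \<Rightarrow> 'a" where
  "Qf v = v 0 * v 0 + v 1 * v 1 + v 2 * v 3"

definition Bf :: "(nat \<Rightarrow> 'a::field) \<Rightarrow> (nat \<Rightarrow> 'a) \<Rightarrow> 'a" where
  "Bf x y = 2 * x 0 * y 0 + 2 * x 1 * y 1 + x 2 * y 3 + x 3 * y 2"

definition KQ :: "(nat \<Rightarrow> 'a::field) set \<Rightarrow> nat" where
  "KQ P = (if \<exists>v\<in>P. v \<noteq> 0 \<and> Qf v = 0 then 1 else 0)"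

lemma Qf_lin: "Qf (sc s x + sc t y) = s * s * Qf x + s * t * Bf x y + t * t * Qf y"
  unfolding Qf_def Bf_def plus_fun_apply sc_simps(10) by algebra

context F3 begin

lemma KQ_ptof: "x \<noteq> 0 \<Longrightarrow> KQ (ptof x) = (if Qf (x::nat\<Rightarrow>'a) = 0 then 1 else 0)"
proof -
  assume x: "x \<noteq> 0"
  have "(\<exists>v\<in>ptof x. v \<noteq> 0 \<and> Qf v = 0) \<longleftrightarrow> Qf x = 0"
  proof
    assume "\<exists>v\<in>ptof x. v \<noteq> 0 \<and> Qf v = 0"
    then obtain c where c: "sc c x \<noteq> 0" "Qf (sc c x) = 0" unfolding ptof_eq by blast
    have "c \<noteq> 0" using c(1) by auto
    moreover have "Qf (sc c x) = c * c * Qf x" using Qf_lin[of c x 0 x] by simp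
    ultimately show "Qf x = 0" using c(2) by simp
  next
    assume "Qf x = 0" thus "\<exists>v\<in>ptof x. v \<noteq> 0 \<and> Qf v = 0" using x in_ptof by blast
  qed
  thus ?thesis unfolding KQ_def by simp
qed

lemma three_zero: "(if (A::'a) = 0 then 1 else 0) + (if C = 0 then 1 else 0) + (if A + B + C = 0 then 1 else 0)
   + (if A - B + C = 0 then 1 else 0) \<le> (2::nat) \<or> (A = 0 \<and> B = 0 \<and> C = 0)"
proof -
  have "A \<in> {0,1,-1}" "B \<in> {0,1,-1}" "C \<in> {0,1,-1}" using UNIV3 by blast+
  thus ?thesis by (elim insertE emptyE) simp_all
qed

lemma sqsum0: "(p::'a) * p + q * q = 0 \<Longrightarrow> p = 0 \<and> q = 0"
proof -
  assume h: "p * p + q * q = 0"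
  have "p \<in> {0,1,-1}" "q \<in> {0,1,-1}" using UNIV3 by blast+
  thus ?thesis using h by (elim insertE emptyE) simp_all
qed

lemma ex_zero_coord:
  assumes "indep2 (x::nat\<Rightarrow>'a) y"
  shows "\<exists>s t. sc s x + sc t y \<noteq> 0 \<and> (sc s x + sc t y) k = 0"
proof (cases "x k = 0 \<and> y k = 0")
  case True
  have "sc 1 x + sc 0 y \<noteq> 0" using assms unfolding indep2_def by (metis one_neq_zero)
  moreover have "(sc 1 x + sc 0 y) k = 0" using True by simp
  ultimately show ?thesis by blast
next
  case False
  have "sc (- y k) x + sc (x k) y \<noteq> 0"
  proof
    assume "sc (- y k) x + sc (x k) y = 0"
    hence "- y k = 0 \<and> x k = 0" using assms unfolding indep2_def by blast
    thus False using False by simp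
  qed
  moreover have "(sc (- y k) x + sc (x k) y) k = 0" by (simp add: algebra_simps)
  ultimately show ?thesis by blast
qed

lemma no_sing_line:
  assumes xy: "x \<in> vecs 3" "y \<in> vecs 3" "indep2 (x::nat\<Rightarrow>'a) y"
    and z: "\<And>s t. Qf (sc s x + sc t y) = 0"
  shows False
proof -
  obtain s1 t1 where st1: "sc s1 x + sc t1 y \<noteq> 0" "(sc s1 x + sc t1 y) 2 = 0" using ex_zero_coord[OF xy(3)] by blast
  obtain s2 t2 where st2: "sc s2 x + sc t2 y \<noteq> 0" "(sc s2 x + sc t2 y) 3 = 0" using ex_zero_coord[OF xy(3)] by blast
  define u where "u = sc s1 x + sc t1 y"
  define w where "w = sc s2 x + sc t2 y"
  have un: "u \<noteq> 0" "u 2 = 0" using st1 unfolding u_def by blast+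
  have wn: "w \<noteq> 0" "w 3 = 0" using st2 unfolding w_def by blast+
  have uv: "u \<in> vecs 3" "w \<in> vecs 3" using xy by (simp_all add: u_def w_def)
  have "Qf u = 0" unfolding u_def by (rule z)
  hence "u 0 * u 0 + u 1 * u 1 = 0" using un(2) unfolding Qf_def by simp
  hence u01: "u 0 = 0" "u 1 = 0" using sqsum0 by blast+
  have "Qf w = 0" unfolding w_def by (rule z)
  hence "w 0 * w 0 + w 1 * w 1 = 0" using wn(2) unfolding Qf_def by simp
  hence w01: "w 0 = 0" "w 1 = 0" using sqsum0 by blast+
  have coords: "v = 0" if "v \<in> vecs 3" "v 0 = 0" "v 1 = 0" "v 2 = 0" "v 3 = 0" for v :: "nat \<Rightarrow> 'a"
  proof (rule ext)
    fix j show "v j = 0 j"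
    proof (cases "j \<le> 3")
      case True hence "j = 0 \<or> j = 1 \<or> j = 2 \<or> j = 3" by auto
      thus ?thesis using that by auto
    next
      case False thus ?thesis using that(1) by (simp add: vecs_def)
    qed
  qed
  have u3: "u 3 \<noteq> 0" using coords[OF uv(1) u01 un(2)] un(1) by blast
  have w2: "w 2 \<noteq> 0" using coords[OF uv(2) w01 _ wn(2)] wn(1) by blast
  have "u + w = sc (s1 + s2) x + sc (t1 + t2) y" unfolding u_def w_def sc_simps(7) by (simp add: ac_simps)
  hence "Qf (u + w) = 0" using z[of "s1 + s2" "t1 + t2"] by (simp only:)
  moreover have "Qf (u + w) = w 2 * u 3" using u01 w01 un(2) wn(2) unfolding Qf_def by simp
  ultimately show False using u3 w2 by simp
qed

lemma KQ_valid: "valid (KQ :: (nat\<Rightarrow>'a) set \<Rightarrow> nat) 2"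
  unfolding valid_def
proof (intro allI impI)
  fix x y :: "nat \<Rightarrow> 'a" assume xy: "x \<in> vecs 3" "y \<in> vecs 3" "indep2 x y"
  note nz = indep2_nz[OF xy(3)]
  have e1: "Qf (x + y) = Qf x + Bf x y + Qf y" using Qf_lin[of 1 x 1 y] by simp
  have e2: "Qf (x - y) = Qf x - Bf x y + Qf y" using Qf_lin[of 1 x "-1" y] by simp
  have "KQ (ptof x) + KQ (ptof y) + KQ (ptof (x + y)) + KQ (ptof (x - y)) \<le> 2 \<or>
      (Qf x = 0 \<and> Bf x y = 0 \<and> Qf y = 0)"
    using three_zero[of "Qf x" "Qf y" "Bf x y"] unfolding KQ_ptof[OF nz(1)] KQ_ptof[OF nz(2)]
      KQ_ptof[OF nz(3)] KQ_ptof[OF nz(4)] e1 e2 by simp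
  moreover have "\<not> (Qf x = 0 \<and> Bf x y = 0 \<and> Qf y = 0)"
  proof
    assume h: "Qf x = 0 \<and> Bf x y = 0 \<and> Qf y = 0"
    have "Qf (sc s x + sc t y) = 0" for s t using h Qf_lin[of s x t y] by simp
    thus False using no_sing_line[OF xy] by blast
  qed
  ultimately show "KQ (ptof x) + KQ (ptof y) + KQ (ptof (x + y)) + KQ (ptof (x - y)) \<le> 2" by blast
qed

end


definition vec4 :: "'a \<Rightarrow> 'a \<Rightarrow> 'a \<Rightarrow> 'a \<Rightarrow> nat \<Rightarrow> 'a::zero" where
  "vec4 p q r t = (\<lambda>i. if i = 0 then p else if i = 1 then q else if i = 2 then r else if i = 3 then t else 0)"

lemma vec4_apply[simp]: "vec4 p q r t 0 = p" "vec4 p q r t 1 = q" "vec4 p q r t 2 = r" "vec4 p q r t 3 = t"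
  by (simp_all add: vec4_def)

lemma vec4_eq: "vec4 p q r t = vec4 p' q' r' t' \<longleftrightarrow> p = p' \<and> q = q' \<and> r = r' \<and> t = t'"
  by (metis vec4_apply)

lemma vec4_vecs: "vec4 p q r t \<in> vecs 3"
  by (simp add: vec4_def vecs_def)

context F3 begin

lemma card_quadric: "card {x\<in>vecs 3 - {0::nat\<Rightarrow>'a}. Qf x = 0} \<ge> 20"
proof -
  define \<phi> where "\<phi> = (\<lambda>(p::'a, q::'a, r::'a). vec4 p q r (- (p * p + q * q) / r))"
  define A where "A = (UNIV::'a set) \<times> (UNIV::'a set) \<times> {1::'a, -1}"
  have cA: "card A = 18" unfolding A_def using card3 by (simp add: card_cartesian_product)
  have inj: "inj_on \<phi> A"
  proof (rule inj_onI)
    fix u v assume "u \<in> A" "v \<in> A" "\<phi> u = \<phi> v"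
    thus "u = v" unfolding \<phi>_def
      by (cases u, cases v) (metis (no_types, lifting) case_prod_conv vec4_apply(1,2,3))
  qed
  define f1 where "f1 = vec4 (0::'a) 0 0 1"
  define f2 where "f2 = vec4 (0::'a) 0 0 (-1)"
  have f12: "f1 \<noteq> f2" unfolding f1_def f2_def by (metis vec4_apply(4) one_ne_m1(1))
  have f1n: "f1 \<notin> \<phi> ` A" and f2n: "f2 \<notin> \<phi> ` A"
    unfolding f1_def f2_def \<phi>_def A_def by (auto simp: vec4_eq)
  define S where "S = insert f1 (insert f2 (\<phi> ` A))"
  have fA: "finite A" unfolding A_def by simp
  have cS: "card S = 20" unfolding S_def using f12 f1n f2n card_image[OF inj] cA fA by simp
  have sub: "S \<subseteq> {x\<in>vecs 3 - {0::nat\<Rightarrow>'a}. Qf x = 0}"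
  proof
    fix x assume "x \<in> S"
    hence "x = f1 \<or> x = f2 \<or> x \<in> \<phi> ` A" unfolding S_def by blast
    thus "x \<in> {x\<in>vecs 3 - {0::nat\<Rightarrow>'a}. Qf x = 0}"
    proof (elim disjE)
      assume x: "x = f1"
      have "f1 \<noteq> 0" unfolding f1_def by (metis vec4_apply(4) one_neq_zero zero_fun_apply)
      moreover have "Qf f1 = 0" unfolding f1_def by (simp add: Qf_def vec4_def)
      ultimately show ?thesis using x vec4_vecs unfolding f1_def by simp
    next
      assume x: "x = f2"
      have "f2 \<noteq> 0"
      proof
        assume "f2 = 0" hence "f2 3 = 0" by simp
        thus False unfolding f2_def by simp
      qed
      moreover have "Qf f2 = 0" unfolding f2_def by (simp add: Qf_def vec4_def)
      ultimately show ?thesis using x vec4_vecs unfolding f2_def by simp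
    next
      assume "x \<in> \<phi> ` A"
      then obtain p q r where pqr: "x = vec4 p q r (- (p * p + q * q) / r)" "r = 1 \<or> r = -1"
        unfolding \<phi>_def A_def by auto
      have r: "r \<noteq> 0" using pqr(2) by auto
      have "x \<noteq> 0" using pqr(1) r by (metis vec4_apply(3) zero_fun_apply)
      moreover have "Qf x = 0" using pqr(1) r by (simp add: Qf_def vec4_def)
      ultimately show ?thesis using vec4_vecs pqr(1) by simp
    qed
  qed
  have "finite {x\<in>vecs 3 - {0::nat\<Rightarrow>'a}. Qf x = 0}" using finite_vecs[of 3] by (rule rev_finite_subset) blast
  hence "card S \<le> card {x\<in>vecs 3 - {0::nat\<Rightarrow>'a}. Qf x = 0}" using sub by (rule card_mono)
  thus ?thesis using cS by simp
qed

lemma KQ_size: "msize 3 (KQ :: (nat\<Rightarrow>'a) set \<Rightarrow> nat) = 10"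
proof -
  have fV: "finite (vecs 3 - {0::nat\<Rightarrow>'a})" using finite_vecs by blast
  have "2 * msize 3 (KQ :: (nat\<Rightarrow>'a) set \<Rightarrow> nat) = (\<Sum>x\<in>vecs 3 - {0::nat\<Rightarrow>'a}. if Qf x = 0 then 1 else 0)"
    unfolding msize_vec by (rule sum.cong[OF refl]) (simp add: KQ_ptof)
  also have "\<dots> = card {x\<in>vecs 3 - {0::nat\<Rightarrow>'a}. Qf x = 0}"
    using sum_if_card[OF fV, of "\<lambda>x. Qf x = 0" 1] by simp
  finally have "2 * msize 3 (KQ :: (nat\<Rightarrow>'a) set \<Rightarrow> nat) \<ge> 20" using card_quadric by simp
  moreover have "msize 3 (KQ :: (nat\<Rightarrow>'a) set \<Rightarrow> nat) \<le> 10" using cap_upper[OF KQ_valid] .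
  ultimately show ?thesis by simp
qed

end



definition ff :: "int \<Rightarrow> int" where
  "ff d = \<lceil>real_of_int d / 12\<rceil> + \<lceil>real_of_int d / 36\<rceil>"

lemma gg: "griesmer_g 3 2 4 d = d + ff d"
proof -
  have "{1..2::nat} = {1,2}" by auto
  moreover have "(8::nat) div 2 = 4" by simp
  ultimately show ?thesis unfolding griesmer_g_def vnum_def ff_def by simp
qed

lemma ff_mono: "d \<le> e \<Longrightarrow> ff d \<le> ff e"
  unfolding ff_def
  by (intro add_mono ceiling_mono divide_right_mono) simp_all

lemma ceil_lemma: "\<lceil>real_of_int (a * q + c) / real_of_int q\<rceil> = a + 1" if "0 < c" "c \<le> q" for a q c :: int
  by (rule ceiling_unique) (use that in \<open>simp_all add: field_simps\<close>)

lemma ceil_exact: "\<lceil>real_of_int (a * q) / real_of_int q\<rceil> = a" if "0 < q" for a q :: int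
  using that by simp

lemma gub: "griesmer_ub 3 1 3 w = int (U w)"
proof -
  define k where "k = int (w div 4)"
  have w4: "w = 4 * (w div 4) + w mod 4" by simp
  have wk: "int w = 4 * k + int (w mod 4)"
  proof -
    have "int w = int (4 * (w div 4) + w mod 4)" using arg_cong[OF w4, of int] .
    also have "\<dots> = 4 * int (w div 4) + int (w mod 4)" by (simp only: of_nat_add of_nat_mult of_nat_numeral)
    finally show ?thesis by (simp only: k_def)
  qed
  have key: "ff (int (U w) - int w) \<le> int w \<and> ff (int (U w) - int w + 1) > int w"
  proof -
    have "w mod 4 < 4" by simp
    hence "w mod 4 = 0 \<or> w mod 4 = 1 \<or> w mod 4 = 2 \<or> w mod 4 = 3" by linarith
    thus ?thesis
    proof (elim disjE)
      assume r: "w mod 4 = 0"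
      have D: "int (U w) - int w = 36 * k" using wk r by (simp add: U_def)
      have a: "ff (36*k) = 4*k" unfolding ff_def
        using ceil_exact[of 12 "3*k"] ceil_exact[of 36 k] by (simp add: mult.commute)
      have b: "ff (36*k + 1) = 4*k + 2" unfolding ff_def
        using ceil_lemma[of 1 12 "3*k"] ceil_lemma[of 1 36 k] by (simp add: mult.commute mult.left_commute)
      show ?thesis unfolding D using a b wk r by simp
    next
      assume r: "w mod 4 = 1"
      have D: "int (U w) - int w = 36 * k" using wk r by (simp add: U_def)
      have a: "ff (36*k) = 4*k" unfolding ff_def
        using ceil_exact[of 12 "3*k"] ceil_exact[of 36 k] by (simp add: mult.commute)
      have b: "ff (36*k + 1) = 4*k + 2" unfolding ff_def
        using ceil_lemma[of 1 12 "3*k"] ceil_lemma[of 1 36 k] by (simp add: mult.commute mult.left_commute)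
      show ?thesis unfolding D using a b wk r by simp
    next
      assume r: "w mod 4 = 2"
      have D: "int (U w) - int w = 36 * k + 12" using wk r by (simp add: U_def)
      have a: "ff (36*k + 12) = 4*k + 2" unfolding ff_def
        using ceil_exact[of 12 "3*k+1"] ceil_lemma[of 12 36 k] by (simp add: algebra_simps)
      have b: "ff (36*k + 12 + 1) = 4*k + 3" unfolding ff_def
        using ceil_lemma[of 1 12 "3*k+1"] ceil_lemma[of 13 36 k] by (simp add: algebra_simps)
      show ?thesis unfolding D using a b wk r by simp
    next
      assume r: "w mod 4 = 3"
      have D: "int (U w) - int w = 36 * k + 24" using wk r by (simp add: U_def)
      have a: "ff (36*k + 24) = 4*k + 3" unfolding ff_def
        using ceil_exact[of 12 "3*k+2"] ceil_lemma[of 24 36 k] by (simp add: algebra_simps)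
      have b: "ff (36*k + 24 + 1) = 4*k + 4" unfolding ff_def
        using ceil_lemma[of 1 12 "3*k+2"] ceil_lemma[of 25 36 k] by (simp add: algebra_simps)
      show ?thesis unfolding D using a b wk r by simp
    qed
  qed
  show ?thesis unfolding griesmer_ub_def
  proof (rule Greatest_equality)
    show "griesmer_g 3 (3 - 1) (3 + 1) (int (U w) - int w) \<le> int (U w)"
      using key by (simp add: gg)
  next
    fix n assume "griesmer_g 3 (3 - 1) (3 + 1) (n - int w) \<le> n"
    hence h: "ff (n - int w) \<le> int w" by (simp add: gg)
    show "n \<le> int (U w)"
    proof (rule ccontr)
      assume "\<not> n \<le> int (U w)"
      hence "int (U w) - int w + 1 \<le> n - int w" by simp
      hence "ff (int (U w) - int w + 1) \<le> ff (n - int w)" by (rule ff_mono)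
      thus False using h key by simp
    qed
  qed
qed


theorem mainTheorem10:
  assumes "card (UNIV :: 'a::{field,finite} set) = 3"
  shows "(\<forall>w::nat. w \<ge> 3 \<longrightarrow> int (m_max TYPE('a) 1 3 w) = griesmer_ub 3 1 3 w)
         \<and> m_max TYPE('a) 1 3 2 = 10"
proof -
  interpret F3 "TYPE('a)" using assms by unfold_locales
  have p1: "int (m_max TYPE('a) 1 3 w) = griesmer_ub 3 1 3 w" if w: "w \<ge> 3" for w
  proof -
    obtain K0 :: "(nat \<Rightarrow> 'a) set \<Rightarrow> nat" where K0: "valid K0 w" "msize 3 K0 = U w"
      using lower_gen[OF w] by blast
    have "m_max TYPE('a) 1 3 w = U w" by (rule mmax_eq[OF upper_gen K0])
    thus ?thesis using gub[of w] by simp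
  qed
  have p2: "m_max TYPE('a) 1 3 2 = 10"
    by (rule mmax_eq[OF cap_upper KQ_valid KQ_size])
  show ?thesis using p1 p2 by blast
qed

end
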